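(* For every positive integer $L$, every $Y\ge1$ and every $\varepsilon>0$, \[ S(L,Y):=\sum_{\substack{\ell\mid L^\infty\\ \ell\le Y}}\frac{\ell}{\nu(\ell)^2}\Big(\sum_{d\mid\ell}c_\ell(d)d^{1/2}\Big)^2\ll_\varepsilon Y^{\varepsilon}\tau(L), \] where $\tau$ is the divisor function.
   Context: $\nu$ is the completely multiplicative function with $\nu(p)=p+1$ for primes $p$. $\ell\mid L^\infty$ means every prime factor of $\ell$ divides $L$. The Chebyshev coefficients $c_{j,n}$ are defined by $x^n=\sum_{j=0}^n c_{j,n}U_j(x/2)$, with $U_j$ the Chebyshev polynomials of the second kind; for $d\mid\ell$, $c_\ell(d)=\prod_{p\mid\ell}c_{j_p,n_p}$ where $p^{j_p}\|d$, $p^{n_p}\|\ell$. *)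

theory Defs
  imports "HOL-Analysis.Analysis" "HOL-Computational_Algebra.Primes"
begin

fun chebU :: "nat \<Rightarrow> real \<Rightarrow> real" where
  "chebU 0 x = 1"
| "chebU (Suc 0) x = 2 * x"
| "chebU (Suc (Suc n)) x = 2 * x * chebU (Suc n) x - chebU n x"

definition cheb_coeff :: "nat \<Rightarrow> nat \<Rightarrow> real" where
  "cheb_coeff j n = (THE c :: nat \<Rightarrow> real. (\<forall>i>n. c i = 0) \<and>
       (\<forall>x::real. x ^ n = (\<Sum>i\<le>n. c i * chebU i (x / 2)))) j"

definition nu :: "nat \<Rightarrow> nat" where
  "nu l = (\<Prod>p\<in>prime_factors l. (p + 1) ^ multiplicity p l)"

definition c_ell :: "nat \<Rightarrow> nat \<Rightarrow> real" where
  "c_ell l d = (\<Prod>p\<in>prime_factors l. cheb_coeff (multiplicity p d) (multiplicity p l))"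

definition S_sum :: "nat \<Rightarrow> real \<Rightarrow> real" where
  "S_sum L Y = (\<Sum>l\<in>{l::nat. 0 < l \<and> real l \<le> Y \<and> prime_factors l \<subseteq> prime_factors L}.
      real l / (real (nu l))^2 * (\<Sum>d | d dvd l. c_ell l d * sqrt (real d))^2)"

end

theory Submission
  imports Defs "HOL-Computational_Algebra.Polynomial"
begin


fun cc :: "nat \<Rightarrow> nat \<Rightarrow> real" where
  "cc j 0 = (if j = 0 then 1 else 0)"
| "cc j (Suc n) = (if j = 0 then cc 1 n else cc (j-1) n + cc (j+1) n)"

lemma cc_zero: "i > n \<Longrightarrow> cc i n = 0"
  by (induction n arbitrary: i) auto

lemma cc_nonneg: "cc i n \<ge> 0"
  by (induction n arbitrary: i) auto

lemma cc_step:
  fixes V :: "nat \<Rightarrow> real"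
  shows "(\<Sum>i\<le>Suc n. cc i (Suc n) * V i) =
         (\<Sum>i\<le>n. cc i n * (V (Suc i) + (if i = 0 then 0 else V (i - 1))))"
proof -
  have L: "(\<Sum>i\<le>Suc n. cc i (Suc n) * V i) =
     (\<Sum>i\<le>Suc n. (if i = 0 then 0 else cc (i-1) n) * V i) + (\<Sum>i\<le>Suc n. cc (i+1) n * V i)"
    unfolding sum.distrib[symmetric] by (rule sum.cong) (auto simp: algebra_simps)
  have 1: "(\<Sum>i\<le>Suc n. (if i = 0 then 0 else cc (i-1) n) * V i) = (\<Sum>i\<le>n. cc i n * V (Suc i))"
    by (subst sum.atMost_Suc_shift) simp
  have 2: "(\<Sum>i\<le>Suc n. cc (i+1) n * V i) = (\<Sum>i\<le>n. cc (Suc i) n * V i)"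
    by (simp add: cc_zero)
  have 3: "(\<Sum>i\<le>n. cc i n * (if i = 0 then 0 else V (i - 1))) =
       (\<Sum>i\<le>Suc n. cc i n * (if i = 0 then 0 else V (i - 1)))"
    by (simp add: cc_zero)
  also have "\<dots> = (\<Sum>i\<le>n. cc (Suc i) n * V i)"
    by (subst sum.atMost_Suc_shift) simp
  finally have 4: "(\<Sum>i\<le>n. cc i n * (if i = 0 then 0 else V (i - 1))) = (\<Sum>i\<le>n. cc (Suc i) n * V i)" .
  have R: "(\<Sum>i\<le>n. cc i n * (V (Suc i) + (if i = 0 then 0 else V (i - 1)))) =
     (\<Sum>i\<le>n. cc i n * V (Suc i)) + (\<Sum>i\<le>n. cc i n * (if i = 0 then 0 else V (i - 1)))"
    unfolding sum.distrib[symmetric] by (rule sum.cong) (auto simp: algebra_simps)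
  show ?thesis using L 1 2 4 R by linarith
qed

lemma chebU_rec: "x * chebU i (x/2) = chebU (Suc i) (x/2) + (if i = 0 then 0 else chebU (i-1) (x/2))"
  by (cases i) auto

lemma cc_repr: "x ^ n = (\<Sum>i\<le>n. cc i n * chebU i (x / 2))"
proof (induction n)
  case 0 then show ?case by simp
next
  case (Suc n)
  have "x ^ Suc n = (\<Sum>i\<le>n. cc i n * (x * chebU i (x / 2)))"
    using Suc by (simp add: sum_distrib_left algebra_simps)
  also have "\<dots> = (\<Sum>i\<le>Suc n. cc i (Suc n) * chebU i (x / 2))"
    by (subst cc_step) (simp add: chebU_rec)
  finally show ?case .
qed




fun chebP :: "nat \<Rightarrow> real poly" where
  "chebP 0 = 1"
| "chebP (Suc 0) = [:0, 1:]"
| "chebP (Suc (Suc n)) = pCons 0 (chebP (Suc n)) - chebP n"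

lemma chebP_poly: "poly (chebP i) x = chebU i (x / 2)"
  by (induction i rule: chebP.induct) auto

lemma chebP_deg: "degree (chebP i) \<le> i \<and> coeff (chebP i) i = 1"
proof (induction i rule: chebP.induct)
  case (3 n)
  then show ?case
    by (auto intro!: degree_diff_le simp: coeff_eq_0 degree_pCons_le le_SucI)
qed auto

lemma cheb_unique_aux:
  "(\<forall>x::real. (\<Sum>i\<le>n. e i * chebU i (x / 2)) = 0) \<Longrightarrow> \<forall>i\<le>n. e i = 0"
proof (induction n)
  case 0
  then show ?case by simp
next
  case (Suc n)
  define Q where "Q = (\<Sum>i\<le>Suc n. smult (e i) (chebP i))"
  have "\<forall>x. poly Q x = 0" using Suc.prems by (simp add: Q_def poly_sum chebP_poly)
  hence Q0: "Q = 0" using poly_all_0_iff_0 by blast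
  have "coeff Q (Suc n) = (\<Sum>i\<le>Suc n. e i * coeff (chebP i) (Suc n))"
    by (simp add: Q_def coeff_sum)
  also have "\<dots> = e (Suc n)"
  proof -
    have "(\<Sum>i\<le>Suc n. e i * coeff (chebP i) (Suc n)) = (\<Sum>i\<le>n. e i * coeff (chebP i) (Suc n)) + e (Suc n)"
      using chebP_deg[of "Suc n"] by simp
    moreover have "coeff (chebP i) (Suc n) = 0" if "i \<le> n" for i
      using chebP_deg[of i] that by (intro coeff_eq_0) auto
    ultimately show ?thesis by simp
  qed
  finally have en: "e (Suc n) = 0" using Q0 by simp
  have "\<forall>x::real. (\<Sum>i\<le>n. e i * chebU i (x / 2)) = 0" using Suc.prems en by simp
  with Suc.IH en show ?case by (auto simp: le_Suc_eq)
qed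

lemma cheb_coeff_eq: "cheb_coeff j n = cc j n"
proof -
  have "(THE c :: nat \<Rightarrow> real. (\<forall>i>n. c i = 0) \<and>
       (\<forall>x::real. x ^ n = (\<Sum>i\<le>n. c i * chebU i (x / 2)))) = (\<lambda>i. cc i n)"
  proof (rule the_equality)
    show "(\<forall>i>n. cc i n = 0) \<and> (\<forall>x::real. x ^ n = (\<Sum>i\<le>n. cc i n * chebU i (x / 2)))"
      using cc_zero cc_repr by auto
  next
    fix c :: "nat \<Rightarrow> real"
    assume c: "(\<forall>i>n. c i = 0) \<and> (\<forall>x::real. x ^ n = (\<Sum>i\<le>n. c i * chebU i (x / 2)))"
    have "\<forall>x::real. (\<Sum>i\<le>n. (c i - cc i n) * chebU i (x / 2)) = 0"
    proof
      fix x :: real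
      have "(\<Sum>i\<le>n. (c i - cc i n) * chebU i (x / 2)) =
          (\<Sum>i\<le>n. c i * chebU i (x / 2)) - (\<Sum>i\<le>n. cc i n * chebU i (x / 2))"
        by (simp add: sum_subtractf algebra_simps)
      thus "(\<Sum>i\<le>n. (c i - cc i n) * chebU i (x / 2)) = 0"
        using c cc_repr[of x n] by simp
    qed
    from cheb_unique_aux[OF this] c cc_zero show "c = (\<lambda>i. cc i n)"
      by (intro ext) (metis eq_iff_diff_eq_0 not_le)
  qed
  thus ?thesis unfolding cheb_coeff_def by simp
qed

definition Aval :: "nat \<Rightarrow> real \<Rightarrow> real" where
  "Aval n y = (\<Sum>j\<le>n. cc j n * y ^ j)"

lemma Aval_bound: "y > 0 \<Longrightarrow> 0 \<le> Aval n y \<and> Aval n y \<le> (y + 1/y) ^ n"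
proof (induction n)
  case 0 then show ?case by (simp add: Aval_def)
next
  case (Suc n)
  have eq: "Aval (Suc n) y = (\<Sum>i\<le>n. cc i n * (y ^ Suc i + (if i = 0 then 0 else y ^ (i - 1))))"
    unfolding Aval_def by (rule cc_step)
  have "\<dots> \<le> (\<Sum>i\<le>n. cc i n * ((y + 1/y) * y ^ i))"
  proof (rule sum_mono)
    fix i assume "i \<in> {..n}"
    have "(if i = 0 then 0 else y ^ (i - 1)) \<le> y ^ i / y"
      using Suc.prems by (cases i) auto
    hence "y ^ Suc i + (if i = 0 then 0 else y ^ (i - 1)) \<le> (y + 1/y) * y ^ i"
      by (simp add: algebra_simps)
    thus "cc i n * (y ^ Suc i + (if i = 0 then 0 else y ^ (i - 1))) \<le> cc i n * ((y + 1/y) * y ^ i)"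
      by (intro mult_left_mono cc_nonneg)
  qed
  also have "\<dots> = (y + 1/y) * Aval n y"
    by (simp add: Aval_def sum_distrib_left algebra_simps)
  also have "\<dots> \<le> (y + 1/y) ^ Suc n"
    using Suc by (simp add: mult_left_mono)
  finally have up: "Aval (Suc n) y \<le> (y + 1/y) ^ Suc n" using eq by simp
  have "0 \<le> Aval (Suc n) y" unfolding Aval_def using Suc.prems
    by (intro sum_nonneg mult_nonneg_nonneg cc_nonneg) auto
  with up show ?case by simp
qed



lemma sqrt_prod: "sqrt (\<Prod>i\<in>A. g i) = (\<Prod>i\<in>A. sqrt (g i))"
  by (induction A rule: infinite_finite_induct) (auto simp: real_sqrt_mult)

lemma prod_exp:
  fixes l :: nat
  assumes "finite P" "\<And>p. p \<in> P \<Longrightarrow> prime p" "l > 0" "prime_factors l \<subseteq> P"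
  shows "(\<Prod>p\<in>P. p ^ multiplicity p l) = l"
proof -
  have "(\<Prod>p\<in>P. p ^ multiplicity p l) = (\<Prod>p\<in>prime_factors l. p ^ multiplicity p l)"
  proof (rule prod.mono_neutral_right)
    show "\<forall>i\<in>P - prime_factors l. i ^ multiplicity i l = 1"
      using assms by (auto simp: in_prime_factors_iff not_dvd_imp_multiplicity_0)
  qed (use assms in auto)
  also have "\<dots> = l" using prod_prime_factors[of l] assms by simp
  finally show ?thesis .
qed

lemma mult_prod_exp:
  fixes f :: "nat \<Rightarrow> nat"
  assumes "finite P" "\<And>p. p \<in> P \<Longrightarrow> prime p" "p \<in> P"
  shows "multiplicity p (\<Prod>q\<in>P. q ^ f q) = f p"
  using multiplicity_prod_prime_powers[of P p f] assms by auto

lemma divisors_bij: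
  fixes l :: nat
  assumes "l > 0"
  shows "bij_betw (\<lambda>f. \<Prod>p\<in>prime_factors l. p ^ f p)
           (PiE (prime_factors l) (\<lambda>p. {..multiplicity p l})) {d. d dvd l}"
proof (rule bij_betw_byWitness[where f' = "\<lambda>d. restrict (\<lambda>p. multiplicity p d) (prime_factors l)"])
  let ?P = "prime_factors l"
  have fin: "finite ?P" by simp
  have pr: "\<And>p. p \<in> ?P \<Longrightarrow> prime p" by auto
  show "\<forall>a\<in>PiE ?P (\<lambda>p. {..multiplicity p l}).
          restrict (\<lambda>p. multiplicity p (\<Prod>p\<in>?P. p ^ a p)) ?P = a"
  proof
    fix a assume a: "a \<in> PiE ?P (\<lambda>p. {..multiplicity p l})"
    show "restrict (\<lambda>p. multiplicity p (\<Prod>p\<in>?P. p ^ a p)) ?P = a"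
    proof (rule ext)
      fix p show "restrict (\<lambda>p. multiplicity p (\<Prod>p\<in>?P. p ^ a p)) ?P p = a p"
        using a mult_prod_exp[OF fin pr, of p a] by (cases "p \<in> ?P") (auto simp: PiE_def extensional_def)
    qed
  qed
  show "\<forall>d\<in>{d. d dvd l}. (\<Prod>p\<in>?P. p ^ restrict (\<lambda>p. multiplicity p d) ?P p) = d"
  proof
    fix d assume d: "d \<in> {d. d dvd l}"
    hence d0: "d > 0" using assms by (auto intro: Nat.gr0I)
    have sub: "prime_factors d \<subseteq> ?P" using d assms by (auto intro: prime_factors_dvd dvd_trans simp: in_prime_factors_iff)
    have "(\<Prod>p\<in>?P. p ^ restrict (\<lambda>p. multiplicity p d) ?P p) = (\<Prod>p\<in>?P. p ^ multiplicity p d)"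
      by (rule prod.cong) auto
    also have "\<dots> = d" by (rule prod_exp[OF fin pr d0 sub])
    finally show "(\<Prod>p\<in>?P. p ^ restrict (\<lambda>p. multiplicity p d) ?P p) = d" .
  qed
  show "(\<lambda>f. \<Prod>p\<in>?P. p ^ f p) ` PiE ?P (\<lambda>p. {..multiplicity p l}) \<subseteq> {d. d dvd l}"
  proof
    fix d assume "d \<in> (\<lambda>f. \<Prod>p\<in>?P. p ^ f p) ` PiE ?P (\<lambda>p. {..multiplicity p l})"
    then obtain f where f: "f \<in> PiE ?P (\<lambda>p. {..multiplicity p l})" and d: "d = (\<Prod>p\<in>?P. p ^ f p)" by blast
    have "d dvd (\<Prod>p\<in>?P. p ^ multiplicity p l)" unfolding d
      using f by (intro prod_dvd_prod le_imp_power_dvd) auto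
    also have "\<dots> = l" using prod_exp[OF fin pr assms] by simp
    finally show "d \<in> {d. d dvd l}" by simp
  qed
  show "(\<lambda>d. restrict (\<lambda>p. multiplicity p d) ?P) ` {d. d dvd l} \<subseteq> PiE ?P (\<lambda>p. {..multiplicity p l})"
    using assms by (auto intro!: dvd_imp_multiplicity_le)
qed



lemma inner_eq:
  fixes l :: nat
  assumes "l > 0"
  shows "(\<Sum>d | d dvd l. c_ell l d * sqrt (real d)) =
         (\<Prod>p\<in>prime_factors l. Aval (multiplicity p l) (sqrt (real p)))"
proof -
  let ?P = "prime_factors l"
  let ?B = "\<lambda>p. {..multiplicity p l}"
  have fin: "finite ?P" by simp
  have pr: "\<And>p. p \<in> ?P \<Longrightarrow> prime p" by auto
  have "(\<Sum>d | d dvd l. c_ell l d * sqrt (real d)) =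
        (\<Sum>f\<in>PiE ?P ?B. c_ell l (\<Prod>p\<in>?P. p ^ f p) * sqrt (real (\<Prod>p\<in>?P. p ^ f p)))"
    by (rule sum.reindex_bij_betw[OF divisors_bij[OF assms], symmetric])
  also have "\<dots> = (\<Sum>f\<in>PiE ?P ?B. \<Prod>p\<in>?P. cc (f p) (multiplicity p l) * sqrt (real p) ^ f p)"
  proof (rule sum.cong[OF refl])
    fix f assume f: "f \<in> PiE ?P ?B"
    have "c_ell l (\<Prod>p\<in>?P. p ^ f p) = (\<Prod>p\<in>?P. cc (f p) (multiplicity p l))"
      unfolding c_ell_def by (rule prod.cong[OF refl]) (simp add: mult_prod_exp[OF fin pr] cheb_coeff_eq)
    moreover have "sqrt (real (\<Prod>p\<in>?P. p ^ f p)) = (\<Prod>p\<in>?P. sqrt (real p) ^ f p)"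
      by (simp add: sqrt_prod real_sqrt_power)
    ultimately show "c_ell l (\<Prod>p\<in>?P. p ^ f p) * sqrt (real (\<Prod>p\<in>?P. p ^ f p)) =
        (\<Prod>p\<in>?P. cc (f p) (multiplicity p l) * sqrt (real p) ^ f p)"
      by (simp add: prod.distrib)
  qed
  also have "\<dots> = (\<Prod>p\<in>?P. \<Sum>j\<in>?B p. cc j (multiplicity p l) * sqrt (real p) ^ j)"
    by (rule prod_sum_PiE[symmetric]) auto
  also have "\<dots> = (\<Prod>p\<in>?P. Aval (multiplicity p l) (sqrt (real p)))"
    by (simp add: Aval_def)
  finally show ?thesis .
qed

lemma nu_eq: "real (nu l) = (\<Prod>p\<in>prime_factors l. (real p + 1) ^ multiplicity p l)"
  by (simp add: nu_def add.commute)

lemma sq_aux: "(y::real) > 0 \<Longrightarrow> (y + 1/y)^2 = (y^2 + 1)^2 / y^2"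
  by (simp add: field_simps power2_eq_square)

lemma term_le1:
  fixes l :: nat
  assumes "l > 0"
  shows "real l / (real (nu l))^2 * (\<Sum>d | d dvd l. c_ell l d * sqrt (real d))^2 \<le> 1"
proof -
  let ?P = "prime_factors l"
  have pr: "\<And>p. p \<in> ?P \<Longrightarrow> prime p" by auto
  have ppos: "real p > 0" if "p \<in> ?P" for p using prime_gt_0_nat[OF pr[OF that]] by simp
  have "(\<Sum>d | d dvd l. c_ell l d * sqrt (real d))^2 =
        (\<Prod>p\<in>?P. (Aval (multiplicity p l) (sqrt (real p)))^2)"
    by (simp only: inner_eq[OF assms] prod_power_distrib)
  also have "\<dots> \<le> (\<Prod>p\<in>?P. ((real p + 1)^2 / real p) ^ multiplicity p l)"
  proof (rule prod_mono)
    fix p assume p: "p \<in> ?P"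
    define y where "y = sqrt (real p)"
    define n where "n = multiplicity p l"
    have y: "y > 0" using ppos[OF p] by (simp add: y_def)
    have b: "0 \<le> Aval n y \<and> Aval n y \<le> (y + 1/y) ^ n"
      by (rule Aval_bound[OF y])
    have "(Aval n y)^2 \<le> ((y + 1/y) ^ n)^2"
      using b by (intro power_mono) auto
    also have "\<dots> = ((y + 1/y)^2) ^ n" by (simp only: power_mult[symmetric] mult.commute)
    also have "(y + 1/y)^2 = (real p + 1)^2 / real p"
      using sq_aux[OF y] ppos[OF p] by (simp add: y_def)
    finally have "(Aval n y)^2 \<le> ((real p + 1)^2 / real p) ^ n" .
    thus "0 \<le> (Aval (multiplicity p l) (sqrt (real p)))^2 \<and> (Aval (multiplicity p l) (sqrt (real p)))^2 \<le> ((real p + 1)^2 / real p) ^ multiplicity p l"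
      by (simp add: y_def n_def)
  qed
  also have "\<dots> = (real (nu l))^2 / real l"
  proof -
    have "l = (\<Prod>p\<in>?P. p ^ multiplicity p l)"
      by (rule prod_exp[symmetric]) (use assms in auto)
    hence "real l = real (\<Prod>p\<in>?P. p ^ multiplicity p l)" by (rule arg_cong)
    also have "\<dots> = (\<Prod>p\<in>?P. real p ^ multiplicity p l)" by (simp only: of_nat_prod of_nat_power)
    finally have rl: "real l = (\<Prod>p\<in>?P. real p ^ multiplicity p l)" .
    have e: "((real p + 1)^2 / real p) ^ multiplicity p l = ((real p + 1) ^ multiplicity p l)^2 / real p ^ multiplicity p l" for p
      by (simp only: power_divide power_mult[symmetric] mult.commute)
    have "(real (nu l))^2 / real l = (\<Prod>p\<in>?P. ((real p + 1) ^ multiplicity p l)^2) / (\<Prod>p\<in>?P. real p ^ multiplicity p l)"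
      by (simp only: nu_eq prod_power_distrib rl)
    also have "\<dots> = (\<Prod>p\<in>?P. ((real p + 1) ^ multiplicity p l)^2 / real p ^ multiplicity p l)"
      by (rule prod_dividef[symmetric])
    finally show ?thesis by (simp only: e)
  qed
  finally have X: "(\<Sum>d | d dvd l. c_ell l d * sqrt (real d))^2 \<le> (real (nu l))^2 / real l" .
  have lp: "real l > 0" using assms by simp
  have nz: "real (nu l) \<noteq> 0" unfolding nu_def by (simp add: prod_zero_iff)
  have "real l / (real (nu l))^2 * (\<Sum>d | d dvd l. c_ell l d * sqrt (real d))^2
        \<le> real l / (real (nu l))^2 * ((real (nu l))^2 / real l)"
    using X lp by (intro mult_left_mono) auto
  also have "\<dots> = 1" using lp nz by (simp add: field_simps)
  finally show ?thesis .
qed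



lemma geom_le:
  fixes x :: real
  assumes "0 \<le> x" "x < 1"
  shows "(\<Sum>j\<le>K. x ^ j) \<le> 1 / (1 - x)"
proof -
  have s: "summable (\<lambda>j. x ^ j)" using assms by (intro summable_geometric) auto
  have "(\<Sum>j\<le>K. x ^ j) = (\<Sum>j<Suc K. x ^ j)" by (simp add: lessThan_Suc_atMost)
  also have "\<dots> \<le> (\<Sum>j. x ^ j)" using s assms by (intro sum_le_suminf) auto
  also have "\<dots> = 1 / (1 - x)" using suminf_geometric[of x] assms by simp
  finally show ?thesis .
qed

lemma mult_le_l:
  fixes l p :: nat
  assumes "l > 0" "prime p"
  shows "multiplicity p l \<le> l"
proof -
  have "p ^ multiplicity p l \<le> l" using multiplicity_dvd[of p l] assms by (intro dvd_imp_le) auto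
  moreover have "multiplicity p l < 2 ^ multiplicity p l" by (rule less_exp)
  moreover have "2 ^ multiplicity p l \<le> p ^ multiplicity p l"
    using prime_ge_2_nat[OF assms(2)] by (intro power_mono) auto
  ultimately show ?thesis by linarith
qed

lemma tau_ge:
  fixes L :: nat
  assumes "L > 0"
  shows "(2::real) ^ card (prime_factors L) \<le> real (card {d. d dvd L})"
proof -
  have "card {d. d dvd L} = card (PiE (prime_factors L) (\<lambda>p. {..multiplicity p L}))"
    using bij_betw_same_card[OF divisors_bij[OF assms]] by simp
  also have "\<dots> = (\<Prod>p\<in>prime_factors L. Suc (multiplicity p L))" by (simp add: card_PiE)
  finally have c: "real (card {d. d dvd L}) = (\<Prod>p\<in>prime_factors L. real (Suc (multiplicity p L)))" by simp
  have "(2::real) ^ card (prime_factors L) = (\<Prod>p\<in>prime_factors L. 2)" by simp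
  also have "\<dots> \<le> (\<Prod>p\<in>prime_factors L. real (Suc (multiplicity p L)))"
  proof (rule prod_mono)
    fix p assume "p \<in> prime_factors L"
    hence "multiplicity p L > 0" using assms by (auto simp: in_prime_factors_iff prime_multiplicity_gt_zero_iff)
    thus "0 \<le> (2::real) \<and> 2 \<le> real (Suc (multiplicity p L))" by simp
  qed
  finally show ?thesis using c by simp
qed



lemma pow_powr: "(x::real) > 0 \<Longrightarrow> (x ^ n) powr a = (x powr a) ^ n"
  by (simp add: powr_power powr_realpow[symmetric] powr_powr mult.commute)

lemma count_bound:
  fixes L :: nat and Y \<epsilon> :: real
  assumes L: "L > 0" and Y: "Y \<ge> 1" and e: "\<epsilon> > 0"
  shows "real (card {l::nat. 0 < l \<and> real l \<le> Y \<and> prime_factors l \<subseteq> prime_factors L})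
     \<le> Y powr \<epsilon> * (\<Prod>p\<in>prime_factors L. 1 / (1 - real p powr (-\<epsilon>)))"
proof -
  define T where "T = {l::nat. 0 < l \<and> real l \<le> Y \<and> prime_factors l \<subseteq> prime_factors L}"
  define P where "P = prime_factors L"
  define K where "K = nat \<lfloor>Y\<rfloor>"
  have finP: "finite P" by (simp add: P_def)
  have prP: "\<And>p. p \<in> P \<Longrightarrow> prime p" by (auto simp: P_def)
  have lK: "l \<le> K" if "l \<in> T" for l
    using that by (auto simp: T_def K_def le_nat_floor)
  have finT: "finite T" using lK by (intro finite_subset[of T "{..K}"]) auto
  define \<phi> where "\<phi> = (\<lambda>l::nat. restrict (\<lambda>p. multiplicity p l) P)"
  define G where "G = (\<lambda>f. real (\<Prod>p\<in>P. p ^ f p) powr (-\<epsilon>))"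
  have psi: "(\<Prod>p\<in>P. p ^ \<phi> l p) = l" if "l \<in> T" for l
  proof -
    have "(\<Prod>p\<in>P. p ^ \<phi> l p) = (\<Prod>p\<in>P. p ^ multiplicity p l)"
      by (rule prod.cong) (auto simp: \<phi>_def)
    also have "\<dots> = l" using that by (intro prod_exp[OF finP prP]) (auto simp: T_def P_def)
    finally show ?thesis .
  qed
  have inj: "inj_on \<phi> T"
    by (rule inj_on_inverseI[where g = "\<lambda>f. \<Prod>p\<in>P. p ^ f p"]) (use psi in auto)
  have img: "\<phi> ` T \<subseteq> PiE P (\<lambda>_. {..K})"
  proof
    fix f assume "f \<in> \<phi> ` T"
    then obtain l where l: "l \<in> T" "f = \<phi> l" by blast
    have "multiplicity p l \<le> K" if "p \<in> P" for p
      using mult_le_l[of l p] prP[OF that] l lK[OF l(1)] by (auto simp: T_def)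
    thus "f \<in> PiE P (\<lambda>_. {..K})" using l by (auto simp: \<phi>_def)
  qed
  have "real (card T) = (\<Sum>l\<in>T. 1)" by simp
  also have "\<dots> \<le> (\<Sum>l\<in>T. Y powr \<epsilon> * real l powr (-\<epsilon>))"
  proof (rule sum_mono)
    fix l assume l: "l \<in> T"
    hence l1: "real l \<ge> 1" "real l \<le> Y" by (auto simp: T_def)
    have "real l powr \<epsilon> \<le> Y powr \<epsilon>" using l1 e by (intro powr_mono2) auto
    moreover have "real l powr \<epsilon> > 0" using l1 by simp
    ultimately show "1 \<le> Y powr \<epsilon> * real l powr (-\<epsilon>)"
      by (simp add: powr_minus field_simps)
  qed
  also have "\<dots> = Y powr \<epsilon> * (\<Sum>l\<in>T. real l powr (-\<epsilon>))"
    by (simp only: sum_distrib_left)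
  finally have first: "real (card T) \<le> Y powr \<epsilon> * (\<Sum>l\<in>T. real l powr (-\<epsilon>))" .
  have "(\<Sum>l\<in>T. real l powr (-\<epsilon>)) = (\<Sum>l\<in>T. G (\<phi> l))"
  proof (rule sum.cong[OF refl])
    fix l assume l: "l \<in> T"
    show "real l powr (-\<epsilon>) = G (\<phi> l)" unfolding G_def psi[OF l] ..
  qed
  also have "(\<Sum>l\<in>T. G (\<phi> l)) = (\<Sum>f\<in>\<phi> ` T. G f)"
    by (rule sum.reindex[OF inj, symmetric, unfolded comp_def])
  also have "\<dots> \<le> (\<Sum>f\<in>PiE P (\<lambda>_. {..K}). G f)"
    by (rule sum_mono2) (use img finP in \<open>auto simp: G_def finite_PiE\<close>)
  also have "\<dots> = (\<Sum>f\<in>PiE P (\<lambda>_. {..K}). \<Prod>p\<in>P. (real p powr (-\<epsilon>)) ^ f p)"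
  proof (rule sum.cong[OF refl])
    fix f assume "f \<in> PiE P (\<lambda>_. {..K})"
    have "G f = (\<Prod>p\<in>P. (real p ^ f p) powr (-\<epsilon>))"
      unfolding G_def by (simp add: prod_powr_distrib)
    also have "\<dots> = (\<Prod>p\<in>P. (real p powr (-\<epsilon>)) ^ f p)"
      by (rule prod.cong[OF refl], rule pow_powr) (use prP prime_gt_0_nat in force)
    finally show "G f = (\<Prod>p\<in>P. (real p powr (-\<epsilon>)) ^ f p)" .
  qed
  also have "\<dots> = (\<Prod>p\<in>P. \<Sum>j\<in>{..K}. (real p powr (-\<epsilon>)) ^ j)"
    by (rule prod_sum_PiE[symmetric]) (use finP in auto)
  also have "\<dots> \<le> (\<Prod>p\<in>P. 1 / (1 - real p powr (-\<epsilon>)))"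
  proof (rule prod_mono)
    fix p assume p: "p \<in> P"
    have p1: "real p > 1" using prime_gt_1_nat[OF prP[OF p]] by simp
    have lt: "real p powr (-\<epsilon>) < 1" using p1 e by (intro powr_less_one) auto
    show "0 \<le> (\<Sum>j\<in>{..K}. (real p powr (-\<epsilon>)) ^ j) \<and>
          (\<Sum>j\<in>{..K}. (real p powr (-\<epsilon>)) ^ j) \<le> 1 / (1 - real p powr (-\<epsilon>))"
      using geom_le[OF _ lt, of K] by (auto intro: sum_nonneg)
  qed
  finally have second: "(\<Sum>l\<in>T. real l powr (-\<epsilon>)) \<le> (\<Prod>p\<in>P. 1 / (1 - real p powr (-\<epsilon>)))" .
  have "real (card T) \<le> Y powr \<epsilon> * (\<Prod>p\<in>P. 1 / (1 - real p powr (-\<epsilon>)))"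
    using first mult_left_mono[OF second, of "Y powr \<epsilon>"] by simp
  thus ?thesis unfolding T_def P_def .
qed



lemma prod_bound:
  fixes \<epsilon> :: real and P :: "nat set"
  assumes e: "\<epsilon> > 0" and finP: "finite P" and prP: "\<And>p. p \<in> P \<Longrightarrow> prime p"
  defines "B \<equiv> 1 / (1 - 2 powr (-\<epsilon>))"
  defines "N \<equiv> nat \<lceil>2 powr (1/\<epsilon>)\<rceil>"
  shows "(\<Prod>p\<in>P. 1 / (1 - real p powr (-\<epsilon>))) \<le> B ^ N * 2 ^ card P"
proof -
  have q1: "2 powr (-\<epsilon>) < 1" using e by (intro powr_less_one) auto
  have B1: "B \<ge> 1" unfolding B_def using q1 by (simp add: field_simps)
  define h where "h = (\<lambda>p::nat. if p < N then B else 1)"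
  have fac: "1 / (1 - real p powr (-\<epsilon>)) \<le> 2 * h p" if p: "p \<in> P" for p
  proof -
    have p2: "real p \<ge> 2" using prime_ge_2_nat[OF prP[OF p]] by simp
    have lt: "real p powr (-\<epsilon>) < 1" using p2 e by (intro powr_less_one) auto
    have le: "real p powr (-\<epsilon>) \<le> 2 powr (-\<epsilon>)" using p2 e by (intro powr_mono2') auto
    show ?thesis
    proof (cases "p < N")
      case True
      have "1 / (1 - real p powr (-\<epsilon>)) \<le> B" unfolding B_def
        using le lt q1 by (intro divide_left_mono mult_pos_pos) auto
      thus ?thesis using True B1 by (simp add: h_def)
    next
      case False
      hence "real p \<ge> 2 powr (1/\<epsilon>)" unfolding N_def by linarith
      hence "real p powr (-\<epsilon>) \<le> (2 powr (1/\<epsilon>)) powr (-\<epsilon>)" using e by (intro powr_mono2') auto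
      also have "\<dots> = 1/2" using e by (simp add: powr_powr powr_minus_divide)
      finally have "real p powr (-\<epsilon>) \<le> 1/2" .
      hence "1 / (1 - real p powr (-\<epsilon>)) \<le> 2" using lt by (simp add: field_simps)
      thus ?thesis using False by (simp add: h_def)
    qed
  qed
  have P1: "(\<Prod>p\<in>P. 1 / (1 - real p powr (-\<epsilon>))) \<le> (\<Prod>p\<in>P. 2 * h p)"
  proof (rule prod_mono)
    fix p assume p: "p \<in> P"
    have p2: "real p \<ge> 2" using prime_ge_2_nat[OF prP[OF p]] by simp
    have lt: "real p powr (-\<epsilon>) < 1" using p2 e by (intro powr_less_one) auto
    show "0 \<le> 1 / (1 - real p powr (-\<epsilon>)) \<and> 1 / (1 - real p powr (-\<epsilon>)) \<le> 2 * h p"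
      using lt fac[OF p] by simp
  qed
  have P2: "(\<Prod>p\<in>P. 2 * h p) = 2 ^ card P * (\<Prod>p\<in>P. h p)" by (simp only: prod.distrib prod_constant)
  have P3: "(\<Prod>p\<in>P. h p) = (\<Prod>p\<in>P \<inter> {p. p < N}. B) * (\<Prod>p\<in>P \<inter> - {p. p < N}. 1)"
    unfolding h_def by (rule prod.If_cases[OF finP])
  have P4: "(\<Prod>p\<in>P \<inter> {p. p < N}. B) * (\<Prod>p\<in>P \<inter> - {p. p < N}. 1) = B ^ card (P \<inter> {p. p < N})"
    by (simp only: prod_constant prod.neutral_const power_one mult_1_right)
  have P5: "B ^ card (P \<inter> {p. p < N}) \<le> B ^ N"
  proof (rule power_increasing[OF _ B1])
    have "card (P \<inter> {p. p < N}) \<le> card {..<N}" by (intro card_mono) auto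
    thus "card (P \<inter> {p. p < N}) \<le> N" by simp
  qed
  have "(\<Prod>p\<in>P. 1 / (1 - real p powr (-\<epsilon>))) \<le> 2 ^ card P * B ^ N"
  proof -
    have Q: "2 ^ card P * B ^ card (P \<inter> {p. p < N}) \<le> 2 ^ card P * B ^ N"
      by (rule mult_left_mono[OF P5]) simp
    have "(\<Prod>p\<in>P. 1 / (1 - real p powr (-\<epsilon>))) \<le> 2 ^ card P * B ^ card (P \<inter> {p. p < N})"
      using P1 P2 P3 P4 by simp
    thus ?thesis using Q by (rule order_trans)
  qed
  thus ?thesis by (simp only: mult.commute)
qed



theorem lemma6p2:
  shows "\<forall>\<epsilon>::real. \<epsilon> > 0 \<longrightarrow> (\<exists>C::real. \<forall>L::nat. \<forall>Y::real. L > 0 \<longrightarrow> Y \<ge> 1 \<longrightarrow>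
           S_sum L Y \<le> C * Y powr \<epsilon> * real (card {d. d dvd L}))"
proof (intro allI impI)
  fix \<epsilon> :: real assume e: "\<epsilon> > 0"
  define B where "B = 1 / (1 - 2 powr (-\<epsilon>))"
  define N where "N = nat \<lceil>2 powr (1/\<epsilon>)\<rceil>"
  show "\<exists>C::real. \<forall>L::nat. \<forall>Y::real. L > 0 \<longrightarrow> Y \<ge> 1 \<longrightarrow>
           S_sum L Y \<le> C * Y powr \<epsilon> * real (card {d. d dvd L})"
  proof (intro exI[of _ "B ^ N"] allI impI)
    fix L :: nat and Y :: real assume L: "L > 0" and Y: "Y \<ge> 1"
    let ?T = "{l::nat. 0 < l \<and> real l \<le> Y \<and> prime_factors l \<subseteq> prime_factors L}"
    have q1: "2 powr (-\<epsilon>) < 1" using e by (intro powr_less_one) auto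
    have B0: "B ^ N \<ge> 0" unfolding B_def using q1 by simp
    have Yp: "Y powr \<epsilon> \<ge> 0" by simp
    have t1: "real l / (real (nu l))^2 * (\<Sum>d | d dvd l. c_ell l d * sqrt (real d))^2 \<le> 1"
      if "l \<in> ?T" for l
      using that by (intro term_le1) simp
    have s1: "S_sum L Y \<le> real (card ?T) * 1"
      unfolding S_sum_def by (rule sum_bounded_above) (rule t1)
    have s2: "real (card ?T) \<le> Y powr \<epsilon> * (\<Prod>p\<in>prime_factors L. 1 / (1 - real p powr (-\<epsilon>)))"
      by (rule count_bound[OF L Y e])
    have pb: "(\<Prod>p\<in>prime_factors L. 1 / (1 - real p powr (-\<epsilon>))) \<le> B ^ N * 2 ^ card (prime_factors L)"
      unfolding B_def N_def by (rule prod_bound[OF e]) auto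
    have s3: "Y powr \<epsilon> * (\<Prod>p\<in>prime_factors L. 1 / (1 - real p powr (-\<epsilon>))) \<le> Y powr \<epsilon> * (B ^ N * 2 ^ card (prime_factors L))"
      by (rule mult_left_mono[OF pb Yp])
    have tg: "B ^ N * 2 ^ card (prime_factors L) \<le> B ^ N * real (card {d. d dvd L})"
      by (rule mult_left_mono[OF tau_ge[OF L] B0])
    have s4: "Y powr \<epsilon> * (B ^ N * 2 ^ card (prime_factors L)) \<le> Y powr \<epsilon> * (B ^ N * real (card {d. d dvd L}))"
      by (rule mult_left_mono[OF tg Yp])
    have "S_sum L Y \<le> Y powr \<epsilon> * (B ^ N * real (card {d. d dvd L}))"
      using s1 s2 s3 s4 by linarith
    thus "S_sum L Y \<le> B ^ N * Y powr \<epsilon> * real (card {d. d dvd L})"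
      by (simp only: mult_ac)
  qed
qed


end
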